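(* Let $K$ be an admissible kernel on $X\times Y$. Then the invariant measure $m_Y$ satisfies $$\inf_{\mu\in\mathcal{M}(Y)}\sup_{x\in X}U_K^\mu(x)=\sup_{x\in X}U_K^{m_Y}(x),$$ i.e. $m_Y$ minimizes $\mu\mapsto\sup_{x\in X}\int_Y K(x,y)\,d\mu(y)$ over $\mathcal{M}(Y)$.
   Context: $(X,d_X)$ and $(Y,d_Y)$ are compact metric spaces and $G$ is a compact topological group acting isometrically and transitively on both $X$ and $Y$. $\mathcal{M}(Y)$ is the set of Borel probability measures on $Y$; $m_X$ and $m_Y$ denote the unique $G$-invariant Radon (Borel) probability measures on $X$ and $Y$. A Borel measurable $K:X\times Y\to\mathbb{R}\cup\{-\infty\}$ is an admissible kernel if: (i) there is $B_K\in[0,\infty)$ with $-\infty\le K(x,y)\le B_K$ for all $x,y$; (ii) $\int_X|K(x,y)|\,dm_X(x)<\infty$ for every $y\in Y$; (iii) for every $y$, $K(\cdot,y)$ is upper semi-continuous; (iv) $K(g(x),y)=K(x,g^{-1}(y))$ for all $g\in G,x\in X,y\in Y$. For $\mu\in\mathcal{M}(Y)$, $U_K^\mu(x)=\int_Y K(x,y)\,d\mu(y)$. *)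

theory Defs
  imports "HOL-Analysis.Analysis" "HOL-Probability.Probability"
begin

text \<open>Lebesgue integral of an extended-real valued function: integral of the positive
part minus integral of the negative part (well defined here since kernels are bounded above).\<close>
definition ereal_integral :: "'a measure \<Rightarrow> ('a \<Rightarrow> ereal) \<Rightarrow> ereal" where
  "ereal_integral M f =
     enn2ereal (\<integral>\<^sup>+ x. e2ennreal (f x) \<partial>M) - enn2ereal (\<integral>\<^sup>+ x. e2ennreal (- f x) \<partial>M)"

definition potential :: "('x \<Rightarrow> 'y \<Rightarrow> ereal) \<Rightarrow> 'y measure \<Rightarrow> 'x \<Rightarrow> ereal" where
  "potential K \<mu> x = ereal_integral \<mu> (\<lambda>y. K x y)"

definition borel_prob_measures :: "'a::topological_space measure set" where
  "borel_prob_measures = {\<mu>. prob_space \<mu> \<and> sets \<mu> = sets borel}"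

definition upper_semicontinuous :: "('a::topological_space \<Rightarrow> ereal) \<Rightarrow> bool" where
  "upper_semicontinuous f \<longleftrightarrow> (\<forall>x c. f x < c \<longrightarrow> (\<forall>\<^sub>F z in nhds x. f z < c))"

definition isometric_transitive_action ::
    "('g::{topological_group_add,t2_space} \<Rightarrow> 'x::metric_space \<Rightarrow> 'x) \<Rightarrow> bool" where
  "isometric_transitive_action act \<longleftrightarrow>
     (\<forall>x. act 0 x = x) \<and> (\<forall>g h x. act (g + h) x = act g (act h x)) \<and>
     continuous_on UNIV (\<lambda>(g, x). act g x) \<and>
     (\<forall>g x y. dist (act g x) (act g y) = dist x y) \<and>
     (\<forall>x y. \<exists>g. act g x = y)"

definition invariant_prob_measure ::
    "('g \<Rightarrow> 'x::topological_space \<Rightarrow> 'x) \<Rightarrow> 'x measure \<Rightarrow> bool" where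
  "invariant_prob_measure act m \<longleftrightarrow> m \<in> borel_prob_measures \<and>
     (\<forall>g. \<forall>A \<in> sets borel. measure m (act g -` A) = measure m A)"

definition admissible_kernel ::
    "('g::group_add \<Rightarrow> 'x::topological_space \<Rightarrow> 'x) \<Rightarrow> ('g \<Rightarrow> 'y::topological_space \<Rightarrow> 'y)
      \<Rightarrow> 'x measure \<Rightarrow> ('x \<Rightarrow> 'y \<Rightarrow> ereal) \<Rightarrow> bool" where
  "admissible_kernel actX actY mX K \<longleftrightarrow>
     (\<lambda>(x, y). K x y) \<in> borel_measurable borel \<and>
     (\<exists>B::real. B \<ge> 0 \<and> (\<forall>x y. K x y \<le> ereal B)) \<and>
     (\<forall>y. (\<integral>\<^sup>+ x. e2ennreal \<bar>K x y\<bar> \<partial>mX) < \<infinity>) \<and>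
     (\<forall>y. upper_semicontinuous (\<lambda>x. K x y)) \<and>
     (\<forall>g x y. K (actX g x) y = K x (actY (- g) y))"

end

theory Submission imports Defs begin

lemma countable_ball_base:
  assumes "compact (UNIV :: 'a::metric_space set)"
  shows "\<exists>B::'a set set. countable B \<and> (\<forall>b\<in>B. open b) \<and>
           (\<forall>x e. e > 0 \<longrightarrow> (\<exists>b\<in>B. x \<in> b \<and> b \<subseteq> ball x e))"
proof -
  have tb: "\<forall>\<epsilon>>0. \<exists>k. finite k \<and> k \<subseteq> (UNIV::'a set) \<and> UNIV \<subseteq> (\<Union>x\<in>k. ball x \<epsilon>)"
    by (rule seq_compact_imp_totally_bounded) (simp add: assms compact_imp_seq_compact)
  have "\<forall>n::nat. \<exists>k. finite k \<and> (UNIV::'a set) \<subseteq> (\<Union>x\<in>k. ball x (1 / Suc n))"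
    using tb by (metis of_nat_0_less_iff zero_less_Suc divide_pos_pos zero_less_one)
  then obtain F where F: "\<And>n. finite (F n) \<and> (UNIV::'a set) \<subseteq> (\<Union>x\<in>F n. ball x (1 / Suc n))"
    by metis
  define B where "B = (\<Union>n. (\<lambda>c. ball c (1 / real (Suc n))) ` F n)"
  have "countable B" unfolding B_def using F by (intro countable_UN) (auto intro: countable_finite)
  moreover have "\<forall>b\<in>B. open b" unfolding B_def by auto
  moreover have "\<exists>b\<in>B. x \<in> b \<and> b \<subseteq> ball x e" if "e > 0" for x :: 'a and e
  proof -
    obtain n :: nat where n: "1 / real (Suc n) < e / 2"
      using \<open>e>0\<close> by (metis half_gt_zero_iff nat_approx_posE)
    obtain c where c: "c \<in> F n" "x \<in> ball c (1 / Suc n)" using F[of n] by blast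
    have "ball c (1 / Suc n) \<subseteq> ball x e"
    proof
      fix z assume "z \<in> ball c (1 / Suc n)"
      then have "dist c z < 1 / Suc n" by simp
      moreover have "dist c x < 1 / Suc n" using c by simp
      ultimately have "dist x z < e" using n dist_triangle[of x z c] dist_commute[of x c] by linarith
      then show "z \<in> ball x e" by simp
    qed
    then show ?thesis using c unfolding B_def by blast
  qed
  ultimately show ?thesis by blast
qed

lemma borel_prod_compact:
  assumes "compact (UNIV :: 'a::metric_space set)" "compact (UNIV :: 'b::metric_space set)"
  shows "sets (borel :: ('a \<times> 'b) measure) \<subseteq> sets (borel \<Otimes>\<^sub>M borel :: ('a \<times> 'b) measure)"
proof -
  obtain BA :: "'a set set" where BA: "countable BA" "\<forall>b\<in>BA. open b"
    "\<forall>x e. e > 0 \<longrightarrow> (\<exists>b\<in>BA. x \<in> b \<and> b \<subseteq> ball x e)"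
    using countable_ball_base[OF assms(1)] by (elim exE conjE) (rule that)
  obtain BB :: "'b set set" where BB: "countable BB" "\<forall>b\<in>BB. open b"
    "\<forall>x e. e > 0 \<longrightarrow> (\<exists>b\<in>BB. x \<in> b \<and> b \<subseteq> ball x e)"
    using countable_ball_base[OF assms(2)] by (elim exE conjE) (rule that)
  have op: "U \<in> sets (borel \<Otimes>\<^sub>M borel :: ('a \<times> 'b) measure)" if "open U" for U :: "('a \<times> 'b) set"
  proof -
    define P where "P = {p \<in> BA \<times> BB. fst p \<times> snd p \<subseteq> U}"
    have "P \<subseteq> BA \<times> BB" unfolding P_def by blast
    moreover have "countable (BA \<times> BB)" using BA(1) BB(1) by (rule countable_SIGMA)
    ultimately have cP: "countable P" by (rule countable_subset)
    have "U = (\<Union>p\<in>P. fst p \<times> snd p)"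
    proof
      show "(\<Union>p\<in>P. fst p \<times> snd p) \<subseteq> U" unfolding P_def by auto
      show "U \<subseteq> (\<Union>p\<in>P. fst p \<times> snd p)"
      proof
        fix z assume "z \<in> U"
        obtain x y where z: "z = (x, y)" by (cases z)
        obtain A B where AB: "open A" "open B" "(x,y) \<in> A \<times> B" "A \<times> B \<subseteq> U"
          using \<open>z \<in> U\<close> z by (metis open_prod_elim[OF \<open>open U\<close>])
        obtain e1 where e1: "e1 > 0" "ball x e1 \<subseteq> A" using AB open_contains_ball by blast
        obtain e2 where e2: "e2 > 0" "ball y e2 \<subseteq> B" using AB open_contains_ball by blast
        obtain a where a: "a \<in> BA" "x \<in> a" "a \<subseteq> ball x e1" using BA(3) e1 by blast
        obtain b where b: "b \<in> BB" "y \<in> b" "b \<subseteq> ball y e2" using BB(3) e2 by blast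
        have "(a, b) \<in> P" unfolding P_def using a b e1 e2 AB by fastforce
        then show "z \<in> (\<Union>p\<in>P. fst p \<times> snd p)" using a b z by force
      qed
    qed
    also have "\<dots> \<in> sets (borel \<Otimes>\<^sub>M borel)"
    proof (rule sets.countable_UN''[OF cP])
      fix p assume "p \<in> P"
      then have "fst p \<in> BA" "snd p \<in> BB" unfolding P_def by auto
      then have "open (fst p)" "open (snd p)" using BA(2) BB(2) by auto
      then show "fst p \<times> snd p \<in> sets (borel \<Otimes>\<^sub>M borel)"
        by (intro pair_measureI) auto
    qed
    finally show ?thesis .
  qed
  have "sigma_sets (space (borel \<Otimes>\<^sub>M borel :: ('a \<times> 'b) measure)) {S. open S} \<subseteq> sets (borel \<Otimes>\<^sub>M borel :: ('a \<times> 'b) measure)"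
    by (rule sets.sigma_sets_subset) (use op in blast)
  then show ?thesis unfolding sets_borel by (simp add: space_pair_measure)
qed


lemma enn2ereal_e2ennreal_max: "enn2ereal (e2ennreal c) = max 0 c"
  by (metis e2ennreal_neg enn2ereal_e2ennreal linear max.absorb1 max.absorb2 zero_ennreal.rep_eq)

lemma ereal_integral_le_const:
  assumes "prob_space M" "\<And>x. f x \<le> c"
  shows "ereal_integral M f \<le> c"
proof -
  interpret prob_space M by fact
  have "(\<integral>\<^sup>+ x. e2ennreal (f x) \<partial>M) \<le> (\<integral>\<^sup>+ x. e2ennreal c \<partial>M)"
    by (intro nn_integral_mono e2ennreal_mono assms(2))
  also have "\<dots> = e2ennreal c" by (simp add: emeasure_space_1)
  finally have 1: "enn2ereal (\<integral>\<^sup>+ x. e2ennreal (f x) \<partial>M) \<le> max 0 c"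
    by (metis enn2ereal_e2ennreal_max less_eq_ennreal.rep_eq)
  have "e2ennreal (- c) = (\<integral>\<^sup>+ x. e2ennreal (- c) \<partial>M)" by (simp add: emeasure_space_1)
  also have "\<dots> \<le> (\<integral>\<^sup>+ x. e2ennreal (- f x) \<partial>M)"
    by (intro nn_integral_mono e2ennreal_mono) (simp add: assms(2))
  finally have 2: "max 0 (-c) \<le> enn2ereal (\<integral>\<^sup>+ x. e2ennreal (- f x) \<partial>M)"
    by (metis enn2ereal_e2ennreal_max less_eq_ennreal.rep_eq)
  have "ereal_integral M f \<le> max 0 c - max 0 (-c)"
    unfolding ereal_integral_def by (rule ereal_minus_mono[OF 1 2])
  also have "max 0 c - max 0 (-c) = c"
    by (cases c) (auto simp: max_def)
  finally show ?thesis .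
qed

lemma ereal_integral_const:
  assumes "prob_space M"
  shows "ereal_integral M (\<lambda>x. c) = c"
proof -
  interpret prob_space M by fact
  have "ereal_integral M (\<lambda>x. c) = max 0 c - max 0 (-c)"
    unfolding ereal_integral_def by (simp add: emeasure_space_1 enn2ereal_e2ennreal_max)
  also have "\<dots> = c" by (cases c) (auto simp: max_def)
  finally show ?thesis .
qed

lemma ennreal_pointwise_identity:
  fixes p q :: ennreal
  shows "e2ennreal (enn2ereal p - enn2ereal q) + q = e2ennreal (- (enn2ereal p - enn2ereal q)) + p"
proof (cases p rule: ennreal_cases)
  case (real a)
  then show ?thesis
  proof (cases q rule: ennreal_cases)
    case (real b)
    have e: "enn2ereal p - enn2ereal q = ereal (a - b)" using real \<open>p = ennreal a\<close> \<open>0 \<le> a\<close>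
      by (simp add: enn2ereal_ennreal)
    show ?thesis
    proof (cases "a \<le> b")
      case True
      then show ?thesis using e real \<open>p = ennreal a\<close> \<open>0 \<le> a\<close>
        by (simp add: ennreal_neg ennreal_plus[symmetric] del: ennreal_plus)
    next
      case False
      then show ?thesis using e real \<open>p = ennreal a\<close> \<open>0 \<le> a\<close>
        by (simp add: ennreal_neg ennreal_plus[symmetric] del: ennreal_plus)
    qed
  next
    case top
    then show ?thesis using real by (simp add: enn2ereal_ennreal)
  qed
next
  case top
  then show ?thesis by (cases q rule: ennreal_cases) (auto simp: enn2ereal_ennreal)
qed


lemma ennreal_neg_diff_le:
  fixes p q :: ennreal
  shows "e2ennreal (- (enn2ereal p - enn2ereal q)) \<le> q"
proof (cases p rule: ennreal_cases)
  case (real a)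
  then show ?thesis
  proof (cases q rule: ennreal_cases)
    case (real b)
    have e: "- (enn2ereal p - enn2ereal q) = ereal (b - a)" using real \<open>p = ennreal a\<close> \<open>0 \<le> a\<close>
      by (simp add: enn2ereal_ennreal)
    show ?thesis using e real \<open>0 \<le> a\<close> by (simp add: ennreal_le_iff2)
  next
    case top
    then show ?thesis by simp
  qed
next
  case top
  then show ?thesis by (cases q rule: ennreal_cases) (auto simp: enn2ereal_ennreal e2ennreal_neg)
qed

lemma ereal_integral_diff:
  fixes P Q :: "'a \<Rightarrow> ennreal"
  assumes [measurable]: "P \<in> borel_measurable M" "Q \<in> borel_measurable M"
    and fin: "(\<integral>\<^sup>+ x. P x \<partial>M) < \<infinity>" "(\<integral>\<^sup>+ x. Q x \<partial>M) < \<infinity>"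
  shows "ereal_integral M (\<lambda>x. enn2ereal (P x) - enn2ereal (Q x))
         = enn2ereal (\<integral>\<^sup>+ x. P x \<partial>M) - enn2ereal (\<integral>\<^sup>+ x. Q x \<partial>M)"
proof -
  define F where "F x = enn2ereal (P x) - enn2ereal (Q x)" for x
  have mF[measurable]: "(\<lambda>x. e2ennreal (F x)) \<in> borel_measurable M" "(\<lambda>x. e2ennreal (- F x)) \<in> borel_measurable M"
    unfolding F_def by measurable
  define A where "A = (\<integral>\<^sup>+ x. e2ennreal (F x) \<partial>M)"
  define B where "B = (\<integral>\<^sup>+ x. e2ennreal (- F x) \<partial>M)"
  define IP where "IP = (\<integral>\<^sup>+ x. P x \<partial>M)"
  define IQ where "IQ = (\<integral>\<^sup>+ x. Q x \<partial>M)"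
  have "A + IQ = (\<integral>\<^sup>+ x. e2ennreal (F x) + Q x \<partial>M)"
    unfolding A_def IQ_def by (rule nn_integral_add[symmetric]) auto
  also have "\<dots> = (\<integral>\<^sup>+ x. e2ennreal (- F x) + P x \<partial>M)"
    unfolding F_def by (intro nn_integral_cong) (rule ennreal_pointwise_identity)
  also have "\<dots> = B + IP"
    unfolding B_def IP_def by (rule nn_integral_add) auto
  finally have eq: "A + IQ = B + IP" .
  have IPf: "IP < top" "IQ < top" using fin unfolding IP_def IQ_def by auto
  have "A \<le> IP" unfolding A_def IP_def F_def
    by (intro nn_integral_mono) (simp add: diff_le_self_ennreal)
  then have Af: "A < top" using IPf(1) by (rule order.strict_trans1)
  have "B \<le> IQ" unfolding B_def IQ_def F_def
    by (intro nn_integral_mono) (rule ennreal_neg_diff_le)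
  then have Bf: "B < top" using IPf(2) by (rule order.strict_trans1)
  obtain a b p q where abpq: "A = ennreal a" "B = ennreal b" "IP = ennreal p" "IQ = ennreal q"
    "a \<ge> 0" "b \<ge> 0" "p \<ge> 0" "q \<ge> 0"
    using Af Bf IPf by (metis ennreal_cases top.not_eq_extremum)
  then have "a + q = b + p" using eq by (simp add: ennreal_plus[symmetric] del: ennreal_plus)
  then have "ereal a - ereal b = ereal p - ereal q" by simp
  then show ?thesis
    unfolding ereal_integral_def F_def[symmetric] A_def[symmetric] B_def[symmetric]
      IP_def[symmetric] IQ_def[symmetric]
    using abpq by (simp add: enn2ereal_ennreal)
qed


lemma act_measurable:
  assumes "isometric_transitive_action act"
  shows "act g \<in> borel_measurable borel"
proof -
  have c: "continuous_on UNIV (\<lambda>(g,x). act g x)"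
    using assms unfolding isometric_transitive_action_def by blast
  have "continuous_on UNIV ((\<lambda>(g,x). act g x) \<circ> (\<lambda>x. (g,x)))"
    by (rule continuous_on_compose) (auto intro!: continuous_intros c[THEN continuous_on_subset])
  then have "continuous_on UNIV (act g)" by (simp add: o_def)
  then show ?thesis by (rule borel_measurable_continuous_onI)
qed

lemma distr_invariant:
  assumes "isometric_transitive_action act" "invariant_prob_measure act m"
  shows "distr m borel (act g) = m"
proof -
  have sm: "sets m = sets borel" and pm: "prob_space m"
    using assms(2) unfolding invariant_prob_measure_def borel_prob_measures_def by auto
  have spm: "space m = UNIV" using sets_eq_imp_space_eq[OF sm] by simp
  have meas: "act g \<in> measurable m borel"
    by (subst measurable_cong_sets[OF sm refl]) (rule act_measurable[OF assms(1)])
  show ?thesis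
  proof (rule measure_eqI)
    show "sets (distr m borel (act g)) = sets m" using sm by simp
    fix A assume "A \<in> sets (distr m borel (act g))"
    then have A: "A \<in> sets borel" by simp
    have "emeasure (distr m borel (act g)) A = emeasure m (act g -` A)"
      using emeasure_distr[OF meas A] spm by simp
    also have "\<dots> = measure m (act g -` A)"
      using pm by (simp add: prob_space.finite_measure finite_measure.emeasure_eq_measure)
    also have "\<dots> = measure m A"
    proof -
      have "measure m (act g -` A) = measure m A"
        using assms(2) A unfolding invariant_prob_measure_def by blast
      then show ?thesis by simp
    qed
    also have "\<dots> = emeasure m A"
      using pm by (simp add: prob_space.finite_measure finite_measure.emeasure_eq_measure)
    finally show "emeasure (distr m borel (act g)) A = emeasure m A" .
  qed
qed

lemma nn_integral_invariant:
  assumes "isometric_transitive_action act" "invariant_prob_measure act m"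
    and h: "h \<in> borel_measurable borel"
  shows "(\<integral>\<^sup>+ x. h (act g x) \<partial>m) = (\<integral>\<^sup>+ x. h x \<partial>m)"
proof -
  have sm: "sets m = sets borel"
    using assms(2) unfolding invariant_prob_measure_def borel_prob_measures_def by auto
  have meas: "act g \<in> measurable m borel"
    by (subst measurable_cong_sets[OF sm refl]) (rule act_measurable[OF assms(1)])
  have h': "h \<in> borel_measurable (distr m borel (act g))"
    using h measurable_cong_sets[of "distr m borel (act g)" borel borel borel] by simp
  have "(\<integral>\<^sup>+ x. h (act g x) \<partial>m) = integral\<^sup>N (distr m borel (act g)) h"
    by (rule nn_integral_distr[symmetric, OF meas h'])
  also have "\<dots> = (\<integral>\<^sup>+ x. h x \<partial>m)" using distr_invariant[OF assms(1,2)] by simp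
  finally show ?thesis .
qed

lemma ereal_integral_invariant:
  assumes "isometric_transitive_action act" "invariant_prob_measure act m"
    and f[measurable]: "(f :: _ \<Rightarrow> ereal) \<in> borel_measurable borel"
  shows "ereal_integral m (\<lambda>x. f (act g x)) = ereal_integral m f"
  unfolding ereal_integral_def
  using nn_integral_invariant[OF assms(1,2), of "\<lambda>x. e2ennreal (f x)" g]
    nn_integral_invariant[OF assms(1,2), of "\<lambda>x. e2ennreal (- f x)" g]
  by simp


lemma ereal_le_abs_aux: "(z::ereal) \<le> \<bar>z\<bar>" "- z \<le> \<bar>z\<bar>"
  by (cases z; simp)+

theorem corollary4p8:
  fixes actX :: "'g::{topological_group_add,t2_space} \<Rightarrow> 'x::metric_space \<Rightarrow> 'x"
    and actY :: "'g \<Rightarrow> 'y::metric_space \<Rightarrow> 'y"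
    and mX :: "'x measure" and mY :: "'y measure"
    and K :: "'x \<Rightarrow> 'y \<Rightarrow> ereal"
  assumes "compact (UNIV :: 'g set)"
    and "compact (UNIV :: 'x set)"
    and "compact (UNIV :: 'y set)"
    and "isometric_transitive_action actX"
    and "isometric_transitive_action actY"
    and "invariant_prob_measure actX mX"
    and "invariant_prob_measure actY mY"
    and "admissible_kernel actX actY mX K"
  shows "(INF \<mu>\<in>borel_prob_measures. SUP x. potential K \<mu> x) = (SUP x. potential K mY x)"
proof -
  note aX = assms(4) and aY = assms(5) and iX = assms(6) and iY = assms(7)
  have Kmeas[measurable]: "(\<lambda>(x, y). K x y) \<in> borel_measurable borel"
    and fin: "\<And>y. (\<integral>\<^sup>+ x. e2ennreal \<bar>K x y\<bar> \<partial>mX) < \<infinity>"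
    and sym: "\<And>g x y. K (actX g x) y = K x (actY (- g) y)"
    using assms(8) unfolding admissible_kernel_def by auto
  have pX: "prob_space mX" and sX: "sets mX = sets borel"
    using iX unfolding invariant_prob_measure_def borel_prob_measures_def by auto
  have mY: "mY \<in> borel_prob_measures"
    using iY unfolding invariant_prob_measure_def by auto
  have Kx[measurable]: "K x \<in> borel_measurable borel" for x
  proof -
    have "(\<lambda>y. (\<lambda>(x, y). K x y) (x, y)) \<in> borel_measurable borel"
      by (rule measurable_compose[OF _ Kmeas]) (rule borel_measurable_continuous_onI, intro continuous_intros)
    then show ?thesis by simp
  qed
  have Ky[measurable]: "(\<lambda>x. K x y) \<in> borel_measurable borel" for y
  proof -
    have "(\<lambda>x. (\<lambda>(x, y). K x y) (x, y)) \<in> borel_measurable borel"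
      by (rule measurable_compose[OF _ Kmeas]) (rule borel_measurable_continuous_onI, intro continuous_intros)
    then show ?thesis by simp
  qed
  have Kbb: "(\<lambda>(x, y). K x y) \<in> borel_measurable (borel \<Otimes>\<^sub>M borel :: ('x \<times> 'y) measure)"
    unfolding in_borel_measurable_borel
  proof
    fix S :: "ereal set" assume "S \<in> sets borel"
    then have "(\<lambda>(x, y). K x y) -` S \<inter> space borel \<in> sets borel"
      by (rule measurable_sets[OF Kmeas])
    then have "(\<lambda>(x, y). K x y) -` S \<inter> space (borel \<Otimes>\<^sub>M borel :: ('x \<times> 'y) measure) \<in> sets borel"
      by (simp add: space_pair_measure)
    then show "(\<lambda>(x, y). K x y) -` S \<inter> space (borel \<Otimes>\<^sub>M borel :: ('x \<times> 'y) measure) \<in> sets (borel \<Otimes>\<^sub>M borel)"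
      using borel_prod_compact[OF assms(2,3)] by blast
  qed
  have Kprod: "(\<lambda>(x, y). K x y) \<in> borel_measurable (mX \<Otimes>\<^sub>M \<mu>)" if "sets \<mu> = sets borel" for \<mu>
    by (subst measurable_cong_sets[OF sets_pair_measure_cong[OF sX that] refl]) (rule Kbb)
  define y0 :: 'y where "y0 = undefined"
  define a0 where "a0 = (\<integral>\<^sup>+ x. e2ennreal (K x y0) \<partial>mX)"
  define b0 where "b0 = (\<integral>\<^sup>+ x. e2ennreal (- K x y0) \<partial>mX)"
  define C where "C = enn2ereal a0 - enn2ereal b0"
  have Kshift: "K x (actY h y0) = K (actX (- h) x) y0" for x h
    using sym[of "- h" x y0] by simp
  have aconst: "(\<integral>\<^sup>+ x. e2ennreal (K x y) \<partial>mX) = a0" for y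
  proof -
    obtain h where h: "actY h y0 = y" using aY unfolding isometric_transitive_action_def by blast
    have "(\<integral>\<^sup>+ x. e2ennreal (K x y) \<partial>mX) = (\<integral>\<^sup>+ x. e2ennreal (K (actX (- h) x) y0) \<partial>mX)"
      using Kshift h by metis
    also have "\<dots> = a0" unfolding a0_def
      by (rule nn_integral_invariant[OF aX iX, of "\<lambda>x. e2ennreal (K x y0)"]) measurable
    finally show ?thesis .
  qed
  have bconst: "(\<integral>\<^sup>+ x. e2ennreal (- K x y) \<partial>mX) = b0" for y
  proof -
    obtain h where h: "actY h y0 = y" using aY unfolding isometric_transitive_action_def by blast
    have "(\<integral>\<^sup>+ x. e2ennreal (- K x y) \<partial>mX) = (\<integral>\<^sup>+ x. e2ennreal (- K (actX (- h) x) y0) \<partial>mX)"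
      using Kshift h by metis
    also have "\<dots> = b0" unfolding b0_def
      by (rule nn_integral_invariant[OF aX iX, of "\<lambda>x. e2ennreal (- K x y0)"]) measurable
    finally show ?thesis .
  qed
  have a0f: "a0 < \<infinity>"
  proof -
    have "a0 \<le> (\<integral>\<^sup>+ x. e2ennreal \<bar>K x y0\<bar> \<partial>mX)" unfolding a0_def
      by (intro nn_integral_mono e2ennreal_mono) (simp add: ereal_le_abs_aux)
    then show ?thesis using fin[of y0] by (rule order.strict_trans1)
  qed
  have b0f: "b0 < \<infinity>"
  proof -
    have "b0 \<le> (\<integral>\<^sup>+ x. e2ennreal \<bar>K x y0\<bar> \<partial>mX)" unfolding b0_def
      by (intro nn_integral_mono e2ennreal_mono) (simp add: ereal_le_abs_aux)
    then show ?thesis using fin[of y0] by (rule order.strict_trans1)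
  qed
  have key: "ereal_integral mX (potential K \<mu>) = C" if \<mu>: "\<mu> \<in> borel_prob_measures" for \<mu>
  proof -
    have p\<mu>: "prob_space \<mu>" and s\<mu>: "sets \<mu> = sets borel"
      using \<mu> unfolding borel_prob_measures_def by auto
    interpret PS: pair_sigma_finite mX \<mu>
      unfolding pair_sigma_finite_def using pX p\<mu> by (simp add: prob_space_imp_sigma_finite)
    interpret P\<mu>: prob_space \<mu> by fact
    have Kp[measurable]: "(\<lambda>z. K (fst z) (snd z)) \<in> borel_measurable (mX \<Otimes>\<^sub>M \<mu>)"
      using Kprod[OF s\<mu>] by (simp add: split_beta')
    have m1: "(\<lambda>(x, y). e2ennreal (K x y)) \<in> borel_measurable (mX \<Otimes>\<^sub>M \<mu>)"
      unfolding split_beta' by measurable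
    have m2: "(\<lambda>(x, y). e2ennreal (- K x y)) \<in> borel_measurable (mX \<Otimes>\<^sub>M \<mu>)"
      unfolding split_beta' by measurable
    define P where "P x = (\<integral>\<^sup>+ y. e2ennreal (K x y) \<partial>\<mu>)" for x
    define Q where "Q x = (\<integral>\<^sup>+ y. e2ennreal (- K x y) \<partial>\<mu>)" for x
    have mP: "P \<in> borel_measurable mX" unfolding P_def
      by (rule PS.M2.borel_measurable_nn_integral[OF m1])
    have mQ: "Q \<in> borel_measurable mX" unfolding Q_def
      by (rule PS.M2.borel_measurable_nn_integral[OF m2])
    have iP: "(\<integral>\<^sup>+ x. P x \<partial>mX) = a0"
    proof -
      have "(\<integral>\<^sup>+ x. P x \<partial>mX) = (\<integral>\<^sup>+ y. (\<integral>\<^sup>+ x. e2ennreal (K x y) \<partial>mX) \<partial>\<mu>)"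
        unfolding P_def by (rule PS.Fubini'[symmetric, OF m1])
      also have "\<dots> = a0" by (simp add: aconst P\<mu>.emeasure_space_1)
      finally show ?thesis .
    qed
    have iQ: "(\<integral>\<^sup>+ x. Q x \<partial>mX) = b0"
    proof -
      have "(\<integral>\<^sup>+ x. Q x \<partial>mX) = (\<integral>\<^sup>+ y. (\<integral>\<^sup>+ x. e2ennreal (- K x y) \<partial>mX) \<partial>\<mu>)"
        unfolding Q_def by (rule PS.Fubini'[symmetric, OF m2])
      also have "\<dots> = b0" by (simp add: bconst P\<mu>.emeasure_space_1)
      finally show ?thesis .
    qed
    have "potential K \<mu> = (\<lambda>x. enn2ereal (P x) - enn2ereal (Q x))"
      unfolding potential_def ereal_integral_def P_def Q_def by simp
    then show ?thesis
      using ereal_integral_diff[OF mP mQ] iP iQ a0f b0f unfolding C_def by simp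
  qed
  have lower: "C \<le> (SUP x. potential K \<mu> x)" if "\<mu> \<in> borel_prob_measures" for \<mu>
  proof -
    have "ereal_integral mX (potential K \<mu>) \<le> (SUP x. potential K \<mu> x)"
      by (rule ereal_integral_le_const[OF pX]) (rule SUP_upper, simp)
    then show ?thesis using key[OF that] by simp
  qed
  define x0 :: 'x where "x0 = undefined"
  have const: "potential K mY x = potential K mY x0" for x
  proof -
    obtain g where g: "actX g x0 = x" using aX unfolding isometric_transitive_action_def by blast
    have "potential K mY x = ereal_integral mY (\<lambda>y. K x0 (actY (- g) y))"
    proof -
      have "K x = (\<lambda>y. K x0 (actY (- g) y))"
        by (rule ext) (use g sym in metis)
      then show ?thesis unfolding potential_def by simp
    qed
    also have "\<dots> = ereal_integral mY (K x0)"
      by (rule ereal_integral_invariant[OF aY iY]) measurable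
    also have "\<dots> = potential K mY x0" unfolding potential_def by simp
    finally show ?thesis .
  qed
  then have pc: "potential K mY = (\<lambda>_. potential K mY x0)" by auto
  have "potential K mY x0 = C"
    using key[OF mY] ereal_integral_const[OF pX, of "potential K mY x0"] pc by simp
  then have supY: "(SUP x. potential K mY x) = C" using pc by simp
  have "(INF \<mu>\<in>borel_prob_measures. SUP x. potential K \<mu> x) \<le> (SUP x. potential K mY x)"
    by (rule INF_lower[OF mY])
  moreover have "C \<le> (INF \<mu>\<in>borel_prob_measures. SUP x. potential K \<mu> x)"
    by (rule INF_greatest) (rule lower)
  ultimately show ?thesis using supY by simp
qed

end
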